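(* Let $X$ and $Y$ be bi-atomic random variables. Then $(X,Y)\in\mathrm{IC}$ if and only if either (i) $X$ and $Y$ have the same support, or (ii) $X$ and $Y$ are independent.
   Context: The support of $X$ is $\{x:\mathbb P(x-\epsilon<X\le x+\epsilon)>0\ \forall\epsilon>0\}$; bi-atomic means the support has exactly two points. $\mathcal L^2$ is the set of non-degenerate real random variables with finite variance. $(X,Y)\in\mathrm{IC}_r$ means $\mathrm{Corr}(X,Y)=\mathrm{Corr}(g(X),g(Y))=r$ for all measurable $g$ with $g(X),g(Y)\in\mathcal L^2$, and $\mathrm{IC}=\bigcup_{r\in[-1,1]}\mathrm{IC}_r$. *)

theory Defs
  imports "HOL-Probability.Probability"
begin

definition support :: "'a measure \<Rightarrow> ('a \<Rightarrow> real) \<Rightarrow> real set" where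
  "support M X = {x. \<forall>e>0. measure M {w \<in> space M. x - e < X w \<and> X w \<le> x + e} > 0}"

definition bi_atomic :: "'a measure \<Rightarrow> ('a \<Rightarrow> real) \<Rightarrow> bool" where
  "bi_atomic M X \<longleftrightarrow> card (support M X) = 2"

definition in_L2 :: "'a measure \<Rightarrow> ('a \<Rightarrow> real) \<Rightarrow> bool" where
  "in_L2 M Z \<longleftrightarrow> Z \<in> borel_measurable M \<and> integrable M (\<lambda>w. (Z w)\<^sup>2)
     \<and> \<not> (\<exists>c. AE w in M. Z w = c)"

definition expect :: "'a measure \<Rightarrow> ('a \<Rightarrow> real) \<Rightarrow> real" where
  "expect M Z = integral\<^sup>L M Z"

definition covar :: "'a measure \<Rightarrow> ('a \<Rightarrow> real) \<Rightarrow> ('a \<Rightarrow> real) \<Rightarrow> real" where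
  "covar M X Y = expect M (\<lambda>w. (X w - expect M X) * (Y w - expect M Y))"

definition corr :: "'a measure \<Rightarrow> ('a \<Rightarrow> real) \<Rightarrow> ('a \<Rightarrow> real) \<Rightarrow> real" where
  "corr M X Y = covar M X Y / sqrt (covar M X X * covar M Y Y)"

definition IC_r :: "'a measure \<Rightarrow> real \<Rightarrow> ('a \<Rightarrow> real) \<Rightarrow> ('a \<Rightarrow> real) \<Rightarrow> bool" where
  "IC_r M r X Y \<longleftrightarrow> in_L2 M X \<and> in_L2 M Y \<and> corr M X Y = r \<and>
     (\<forall>g::real \<Rightarrow> real. g \<in> borel_measurable borel \<and> in_L2 M (g \<circ> X) \<and> in_L2 M (g \<circ> Y)
        \<longrightarrow> corr M (g \<circ> X) (g \<circ> Y) = r)"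

definition IC :: "'a measure \<Rightarrow> ('a \<Rightarrow> real) \<Rightarrow> ('a \<Rightarrow> real) \<Rightarrow> bool" where
  "IC M X Y \<longleftrightarrow> (\<exists>r\<in>{-1..1}. IC_r M r X Y)"

end

theory Submission
  imports Defs
begin

context prob_space begin

lemma lin_expect:
  assumes A: "A \<in> events" and U: "U \<in> borel_measurable M"
    and ae: "AE w in M. U w = \<alpha> + \<beta> * indicator A w"
  shows "integrable M U" "expectation U = \<alpha> + \<beta> * prob A"
proof -
  have i: "integrable M (\<lambda>w. \<alpha> + \<beta> * indicator A w :: real)"
    using A by (intro Bochner_Integration.integrable_add integrable_mult_right) (auto simp: emeasure_eq_measure)
  have m: "(\<lambda>w. \<alpha> + \<beta> * indicator A w :: real) \<in> borel_measurable M"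
      using A by (intro borel_measurable_add borel_measurable_times borel_measurable_const borel_measurable_indicator)
  from integrable_cong_AE[OF U m ae] i show "integrable M U" by simp
  have "expectation U = expectation (\<lambda>w. \<alpha> + \<beta> * indicator A w)"
    by (rule integral_cong_AE[OF U m ae])
  also have "\<dots> = \<alpha> + \<beta> * prob A"
    using A by (subst Bochner_Integration.integral_add) (auto simp: prob_space emeasure_eq_measure)
  finally show "expectation U = \<alpha> + \<beta> * prob A" .
qed

lemma prod_expect:
  assumes A: "A \<in> events" and B: "B \<in> events"
    and U: "U \<in> borel_measurable M" and V: "V \<in> borel_measurable M"
    and aeU: "AE w in M. U w = \<alpha> + \<beta> * indicator A w"
    and aeV: "AE w in M. V w = \<gamma> + \<delta> * indicator B w"
  shows "expectation (\<lambda>w. U w * V w) = \<alpha>*\<gamma> + \<alpha>*\<delta>*prob B + \<beta>*\<gamma>*prob A + \<beta>*\<delta>*prob (A \<inter> B)"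
proof -
  have ae: "AE w in M. U w * V w = \<alpha>*\<gamma> + \<alpha>*\<delta>*indicator B w + \<beta>*\<gamma>*indicator A w + \<beta>*\<delta>*indicator (A \<inter> B) w"
    using aeU aeV by eventually_elim (auto simp: indicator_def algebra_simps)
  have "expectation (\<lambda>w. U w * V w) = expectation (\<lambda>w. \<alpha>*\<gamma> + \<alpha>*\<delta>*indicator B w + \<beta>*\<gamma>*indicator A w + \<beta>*\<delta>*indicator (A \<inter> B) w)"
    using U V ae A B by (intro integral_cong_AE) auto
  also have "\<dots> = \<alpha>*\<gamma> + \<alpha>*\<delta>*prob B + \<beta>*\<gamma>*prob A + \<beta>*\<delta>*prob (A \<inter> B)"
  proof -
    have AB: "A \<inter> B \<in> events" using A B by auto
    have [simp]: "integrable M (indicat_real S)" if "S \<in> events" for S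
      using that by (auto simp: emeasure_eq_measure)
    show ?thesis using A B AB
      by (simp add: prob_space Bochner_Integration.integral_add Int_absorb2 sets.sets_into_space)
  qed
  finally show ?thesis .
qed

lemma covar_lin:
  assumes A: "A \<in> events" and B: "B \<in> events"
    and U: "U \<in> borel_measurable M" and V: "V \<in> borel_measurable M"
    and aeU: "AE w in M. U w = \<alpha> + \<beta> * indicator A w"
    and aeV: "AE w in M. V w = \<gamma> + \<delta> * indicator B w"
  shows "covar M U V = \<beta>*\<delta>*(prob (A \<inter> B) - prob A * prob B)"
proof -
  have EU: "expect M U = \<alpha> + \<beta> * prob A" using lin_expect[OF A U aeU] by (simp add: expect_def)
  have EV: "expect M V = \<gamma> + \<delta> * prob B" using lin_expect[OF B V aeV] by (simp add: expect_def)
  have "covar M U V = expectation (\<lambda>w. (U w - expect M U) * (V w - expect M V))"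
    by (simp add: covar_def expect_def)
  also have "\<dots> = (- \<beta> * prob A)*(- \<delta> * prob B) + (- \<beta> * prob A)*\<delta>*prob B + \<beta>*(- \<delta> * prob B)*prob A + \<beta>*\<delta>*prob (A \<inter> B)"
  proof (rule prod_expect[OF A B])
    show "AE w in M. U w - expect M U = - \<beta> * prob A + \<beta> * indicator A w"
      using aeU by eventually_elim (simp add: EU)
    show "AE w in M. V w - expect M V = - \<delta> * prob B + \<delta> * indicator B w"
      using aeV by eventually_elim (simp add: EV)
  qed (use U V in auto)
  also have "\<dots> = \<beta>*\<delta>*(prob (A \<inter> B) - prob A * prob B)" by (simp add: algebra_simps)
  finally show ?thesis .
qed

lemma ae_pos_ex:
  assumes ae: "AE w in M. P w" and S: "S \<in> events" and pos: "prob S > 0"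
  shows "\<exists>w\<in>S. P w"
proof (rule ccontr)
  assume nc: "\<not> (\<exists>w\<in>S. P w)"
  have "AE w in M. w \<in> S \<longleftrightarrow> w \<in> {}"
    using ae by (rule eventually_mono) (use nc in auto)
  then have "prob S = prob {}" using S by (intro finite_measure_eq_AE) auto
  with pos show False by simp
qed

lemma corr_lin:
  assumes A: "A \<in> events" and B: "B \<in> events"
    and U: "U \<in> borel_measurable M" and V: "V \<in> borel_measurable M"
    and aeU: "AE w in M. U w = \<alpha> + \<beta> * indicator A w"
    and aeV: "AE w in M. V w = \<gamma> + \<delta> * indicator B w"
    and b: "\<beta> \<noteq> 0" and d: "\<delta> \<noteq> 0"
  shows "corr M U V = sgn (\<beta>*\<delta>) * ((prob (A \<inter> B) - prob A * prob B) /
            sqrt ((prob A - prob A * prob A) * (prob B - prob B * prob B)))"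
proof -
  let ?c = "prob (A \<inter> B) - prob A * prob B"
  let ?vA = "prob A - prob A * prob A"
  let ?vB = "prob B - prob B * prob B"
  have cUV: "covar M U V = \<beta>*\<delta>*?c" by (rule covar_lin[OF A B U V aeU aeV])
  have cUU: "covar M U U = \<beta>*\<beta>*?vA" using covar_lin[OF A A U U aeU aeU] by simp
  have cVV: "covar M V V = \<delta>*\<delta>*?vB" using covar_lin[OF B B V V aeV aeV] by simp
  have sq: "sqrt (\<beta>*\<beta>*?vA * (\<delta>*\<delta>*?vB)) = \<bar>\<beta>*\<delta>\<bar> * sqrt (?vA * ?vB)"
  proof -
    have "\<beta>*\<beta>*?vA * (\<delta>*\<delta>*?vB) = ((\<beta>*\<delta>)*(\<beta>*\<delta>)) * (?vA * ?vB)" by (simp add: algebra_simps)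
    then show ?thesis by (simp add: real_sqrt_mult real_sqrt_abs2 abs_mult)
  qed
  have "corr M U V = \<beta>*\<delta>*?c / (\<bar>\<beta>*\<delta>\<bar> * sqrt (?vA * ?vB))"
    unfolding corr_def cUV cUU cVV sq ..
  also have "\<dots> = (\<beta>*\<delta> / \<bar>\<beta>*\<delta>\<bar>) * (?c / sqrt (?vA * ?vB))"
    by simp
  also have "\<beta>*\<delta> / \<bar>\<beta>*\<delta>\<bar> = sgn (\<beta>*\<delta>)"
    using b d by (simp add: sgn_if)
  finally show ?thesis .
qed

lemma in_L2_lin:
  assumes A: "A \<in> events" and U: "U \<in> borel_measurable M"
    and aeU: "AE w in M. U w = \<alpha> + \<beta> * indicator A w"
    and b: "\<beta> \<noteq> 0" and p0: "0 < prob A" and p1: "prob A < 1"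
  shows "in_L2 M U"
  unfolding in_L2_def
proof (intro conjI U notI)
  have "AE w in M. (U w)\<^sup>2 = \<alpha>\<^sup>2 + (2*\<alpha>*\<beta> + \<beta>\<^sup>2) * indicator A w"
    using aeU by eventually_elim (simp add: indicator_def power2_eq_square algebra_simps)
  moreover have "(\<lambda>w. (U w)\<^sup>2) \<in> borel_measurable M" using U by measurable
  ultimately show "integrable M (\<lambda>w. (U w)\<^sup>2)" using lin_expect(1)[OF A] by blast
next
  assume "\<exists>c. AE w in M. U w = c"
  then obtain c where c: "AE w in M. U w = c" by blast
  have ae: "AE w in M. \<alpha> + \<beta> * indicator A w = c" using c aeU by eventually_elim simp
  obtain w1 where w1: "w1 \<in> A" "\<alpha> + \<beta> * indicator A w1 = c" using ae_pos_ex[OF ae A p0] by blast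
  have Ac: "space M - A \<in> events" using A by auto
  have "prob (space M - A) = 1 - prob A" using A by (simp add: prob_compl)
  then have "prob (space M - A) > 0" using p1 by simp
  then obtain w2 where w2: "w2 \<in> space M - A" "\<alpha> + \<beta> * indicator A w2 = c" using ae_pos_ex[OF ae Ac] by blast
  from w1 w2 b show False by simp
qed

lemma not_L2_const: "AE w in M. U w = c \<Longrightarrow> \<not> in_L2 M U"
  unfolding in_L2_def by blast

lemma support_AE:
  assumes X[measurable]: "X \<in> borel_measurable M"
  shows "AE w in M. X w \<in> support M X"
proof -
  define S where "S = {pq \<in> \<rat> \<times> \<rat>. prob {w \<in> space M. fst pq < X w \<and> X w \<le> snd pq} = 0}"
  have cS: "countable S" unfolding S_def
    by (rule countable_subset[of _ "\<rat> \<times> \<rat>"]) (auto intro: countable_rat)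
  have "\<forall>pq\<in>S. AE w in M. \<not> (fst pq < X w \<and> X w \<le> snd pq)"
  proof
    fix pq assume "pq \<in> S"
    then have z: "prob {w \<in> space M. fst pq < X w \<and> X w \<le> snd pq} = 0" by (simp add: S_def)
    have ev: "{w \<in> space M. fst pq < X w \<and> X w \<le> snd pq} \<in> events" by measurable
    show "AE w in M. \<not> (fst pq < X w \<and> X w \<le> snd pq)"
      by (rule AE_I'[of "{w \<in> space M. fst pq < X w \<and> X w \<le> snd pq}"])
         (use z ev in \<open>auto simp: emeasure_eq_measure\<close>)
  qed
  then have "AE w in M. \<forall>pq\<in>S. \<not> (fst pq < X w \<and> X w \<le> snd pq)"
    using AE_ball_countable[OF cS, where P="\<lambda>w pq. \<not> (fst pq < X w \<and> X w \<le> snd pq)"] by blast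
  then show ?thesis
  proof (rule eventually_mono)
    fix w assume H: "\<forall>pq\<in>S. \<not> (fst pq < X w \<and> X w \<le> snd pq)"
    show "X w \<in> support M X"
    proof (rule ccontr)
      let ?x = "X w"
      assume "X w \<notin> support M X"
      then obtain e where e: "e > 0" "\<not> prob {v \<in> space M. ?x - e < X v \<and> X v \<le> ?x + e} > 0"
        unfolding support_def by auto
      then have z: "prob {v \<in> space M. ?x - e < X v \<and> X v \<le> ?x + e} = 0"
        using measure_nonneg[of M "{v \<in> space M. ?x - e < X v \<and> X v \<le> ?x + e}"] by linarith
      obtain p where p: "p \<in> \<rat>" "?x - e < p" "p < ?x" using Rats_dense_in_real[of "?x - e" ?x] e by auto
      obtain q where q: "q \<in> \<rat>" "?x < q" "q < ?x + e" using Rats_dense_in_real[of ?x "?x + e"] e by auto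
      have "prob {v \<in> space M. p < X v \<and> X v \<le> q} \<le> prob {v \<in> space M. ?x - e < X v \<and> X v \<le> ?x + e}"
        using p q by (intro finite_measure_mono) auto
      then have "prob {v \<in> space M. p < X v \<and> X v \<le> q} = 0"
        using z measure_nonneg[of M] by (metis order_antisym)
      then have "(p, q) \<in> S" using p q by (simp add: S_def)
      with H p q show False by auto
    qed
  qed
qed

lemma bi_atomic_struct:
  assumes X[measurable]: "X \<in> borel_measurable M" and ba: "bi_atomic M X"
  shows "\<exists>a b. a < b \<and> support M X = {a, b} \<and> (AE w in M. X w = a \<or> X w = b)
     \<and> 0 < prob {w \<in> space M. X w = b} \<and> prob {w \<in> space M. X w = b} < 1"
proof -
  obtain x y where xy: "x \<noteq> y" "support M X = {x, y}"
    using ba unfolding bi_atomic_def by (auto simp: card_2_iff)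
  define a where "a = min x y"
  define b where "b = max x y"
  have ab: "a < b" "support M X = {a, b}" using xy by (auto simp: a_def b_def min_def max_def)
  have ae: "AE w in M. X w = a \<or> X w = b" using support_AE[OF X] ab(2) by simp
  define e where "e = (b - a) / 2"
  have e: "e > 0" using ab by (simp add: e_def)
  have "b \<in> support M X" using ab by simp
  then have "prob {w \<in> space M. b - e < X w \<and> X w \<le> b + e} > 0" using e by (simp add: support_def)
  also have "prob {w \<in> space M. b - e < X w \<and> X w \<le> b + e} = prob {w \<in> space M. X w = b}"
    using ae ab e by (intro finite_measure_eq_AE) (auto simp: e_def field_simps elim!: eventually_mono)
  finally have pb: "prob {w \<in> space M. X w = b} > 0" .
  have "a \<in> support M X" using ab by simp
  then have "prob {w \<in> space M. a - e < X w \<and> X w \<le> a + e} > 0" using e by (simp add: support_def)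
  also have "prob {w \<in> space M. a - e < X w \<and> X w \<le> a + e} = prob {w \<in> space M. X w = a}"
    using ae ab e by (intro finite_measure_eq_AE) (auto simp: e_def field_simps elim!: eventually_mono)
  finally have pa: "prob {w \<in> space M. X w = a} > 0" .
  have "prob ({w \<in> space M. X w = a} \<union> {w \<in> space M. X w = b}) = prob {w \<in> space M. X w = a} + prob {w \<in> space M. X w = b}"
    using ab by (intro finite_measure_Union) auto
  moreover have "prob ({w \<in> space M. X w = a} \<union> {w \<in> space M. X w = b}) \<le> 1" by simp
  ultimately have "prob {w \<in> space M. X w = b} < 1" using pa by linarith
  with ab ae pb show ?thesis by blast
qed

lemma rep:
  fixes g :: "real \<Rightarrow> real" and X :: "'a \<Rightarrow> real"
  assumes ae: "AE w in M. X w = a \<or> X w = b" and ab: "a \<noteq> b"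
  shows "AE w in M. g (X w) = g a + (g b - g a) * indicator {w \<in> space M. X w = b} w"
  using ae AE_space by eventually_elim (use ab in auto)

lemma indep_iff:
  fixes X Y :: "'a \<Rightarrow> real"
  assumes X[measurable]: "X \<in> borel_measurable M" and Y[measurable]: "Y \<in> borel_measurable M"
    and aeX: "AE w in M. X w = a \<or> X w = b" and ab: "a \<noteq> b"
    and aeY: "AE w in M. Y w = c \<or> Y w = d" and cd: "c \<noteq> d"
  shows "indep_var borel X borel Y \<longleftrightarrow>
    prob ({w \<in> space M. X w = b} \<inter> {w \<in> space M. Y w = d}) = prob {w \<in> space M. X w = b} * prob {w \<in> space M. Y w = d}"
    (is "_ \<longleftrightarrow> prob (?A \<inter> ?B) = prob ?A * prob ?B")
proof
  assume "indep_var borel X borel Y"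
  from indep_varD[OF this, of "{b}" "{d}"]
  have "prob ((\<lambda>x. (X x, Y x)) -` ({b} \<times> {d}) \<inter> space M) =
    prob (X -` {b} \<inter> space M) * prob (Y -` {d} \<inter> space M)" using borel_closed[OF closed_singleton] by metis
  moreover have "(\<lambda>x. (X x, Y x)) -` ({b} \<times> {d}) \<inter> space M = ?A \<inter> ?B" by auto
  moreover have "X -` {b} \<inter> space M = ?A" "Y -` {d} \<inter> space M = ?B" by auto
  ultimately show "prob (?A \<inter> ?B) = prob ?A * prob ?B" by simp
next
  assume ind: "prob (?A \<inter> ?B) = prob ?A * prob ?B"
  have "?A = X -` {b} \<inter> space M" "?B = Y -` {d} \<inter> space M" by auto
  then have evA: "?A \<in> events" and evB: "?B \<in> events"
    using measurable_sets[OF X borel_closed[OF closed_singleton]] measurable_sets[OF Y borel_closed[OF closed_singleton]]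
    by simp_all
  { fix S and X :: "'a \<Rightarrow> real"
    have "Int_stable {X -` A \<inter> space M |A. A \<in> sets (borel :: real measure)}"
    proof (safe intro!: Int_stableI)
      fix A B :: "real set" assume "A \<in> sets borel" "B \<in> sets borel"
      then show "\<exists>C. (X -` A \<inter> space M) \<inter> (X -` B \<inter> space M) = (X -` C \<inter> space M) \<and> C \<in> sets borel"
        by (intro exI[of _ "A \<inter> B"]) auto
    qed }
  note Int_stable = this
  show "indep_var borel X borel Y" unfolding indep_var_eq
  proof (intro conjI indep_set_sigma_sets Int_stable)
    show "random_variable borel X" "random_variable borel Y" by simp_all
    show "indep_set {X -` A \<inter> space M |A. A \<in> sets borel} {Y -` A \<inter> space M |A. A \<in> sets borel}"
    proof (safe intro!: indep_setI)
      fix S :: "real set" assume "S \<in> sets borel" then show "X -` S \<inter> space M \<in> sets M"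
        using X by (auto intro: measurable_sets)
    next
      fix S :: "real set" assume "S \<in> sets borel" then show "Y -` S \<inter> space M \<in> sets M"
        using Y by (auto intro: measurable_sets)
    next
      fix S T :: "real set" assume S: "S \<in> sets borel" and T: "T \<in> sets borel"
      let ?U = "\<lambda>w. indicator S (X w) :: real"
      let ?V = "\<lambda>w. indicator T (Y w) :: real"
      have mU: "?U \<in> borel_measurable M" by (rule measurable_compose[OF X borel_measurable_indicator[OF S]])
      have mV: "?V \<in> borel_measurable M" by (rule measurable_compose[OF Y borel_measurable_indicator[OF T]])
      have aeU: "AE w in M. ?U w = indicator S a + (indicator S b - indicator S a) * indicator ?A w"
        by (rule rep[OF aeX ab])
      have aeV: "AE w in M. ?V w = indicator T c + (indicator T d - indicator T c) * indicator ?B w"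
        by (rule rep[OF aeY cd])
      have eS: "X -` S \<inter> space M \<in> events" using X S by (auto intro: measurable_sets)
      have eT: "Y -` T \<inter> space M \<in> events" using Y T by (auto intro: measurable_sets)
      have pS: "prob (X -` S \<inter> space M) = expectation ?U"
      proof -
        have "expectation ?U = expectation (indicator (X -` S \<inter> space M))"
          by (intro Bochner_Integration.integral_cong) (auto simp: indicator_def)
        then show ?thesis by (simp add: Int_absorb2)
      qed
      have pT: "prob (Y -` T \<inter> space M) = expectation ?V"
      proof -
        have "expectation ?V = expectation (indicator (Y -` T \<inter> space M))"
          by (intro Bochner_Integration.integral_cong) (auto simp: indicator_def)
        then show ?thesis by (simp add: Int_absorb2)
      qed
      have pST: "prob ((X -` S \<inter> space M) \<inter> (Y -` T \<inter> space M)) = expectation (\<lambda>w. ?U w * ?V w)"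
      proof -
        have "expectation (\<lambda>w. ?U w * ?V w) = expectation (indicator ((X -` S \<inter> space M) \<inter> (Y -` T \<inter> space M)))"
          by (intro Bochner_Integration.integral_cong) (auto simp: indicator_def)
        moreover have "(X -` S \<inter> space M) \<inter> (Y -` T \<inter> space M) \<inter> space M = (X -` S \<inter> space M) \<inter> (Y -` T \<inter> space M)" by blast
        ultimately show ?thesis by simp
      qed
      show "prob ((X -` S \<inter> space M) \<inter> (Y -` T \<inter> space M)) = prob (X -` S \<inter> space M) * prob (Y -` T \<inter> space M)"
        unfolding pS pT pST lin_expect(2)[OF evA mU aeU] lin_expect(2)[OF evB mV aeV]
          prod_expect[OF evA evB mU mV aeU aeV] ind
        by (simp add: algebra_simps)
    qed
  qed
qed

lemma cov_bound:
  assumes A: "A \<in> events" and B: "B \<in> events"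
  shows "(prob (A \<inter> B) - prob A * prob B)\<^sup>2 \<le> (prob A - prob A * prob A) * (prob B - prob B * prob B)"
proof -
  define x where "x = prob (A \<inter> B)"
  define y where "y = prob A - x"
  define z where "z = prob B - x"
  define w where "w = 1 - prob A - prob B + x"
  have x0: "x \<ge> 0" by (simp add: x_def)
  have y0: "y \<ge> 0" unfolding y_def x_def using A by (simp add: finite_measure_mono)
  have z0: "z \<ge> 0" unfolding z_def x_def using B by (simp add: finite_measure_mono)
  have "prob (A \<union> B) = prob A + prob B - x"
    using finite_measure_Union'[OF A B] finite_measure_Diff'[OF B A] by (simp add: x_def Int_commute)
  moreover have "prob (A \<union> B) \<le> 1" by simp
  ultimately have w0: "w \<ge> 0" by (simp add: w_def)
  have pA: "prob A = x + y" and pB: "prob B = x + z" by (simp_all add: y_def z_def)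
  have s: "x + y + z + w = 1" by (simp add: y_def z_def w_def)
  have wd: "w = 1 - x - y - z" using s by simp
  have e1: "prob A - prob A * prob A = (x+y)*(z+w)"
    unfolding pA wd by (simp add: algebra_simps)
  have e2: "prob B - prob B * prob B = (x+z)*(y+w)"
    unfolding pB wd by (simp add: algebra_simps)
  have e3: "prob (A \<inter> B) - prob A * prob B = x*w - y*z"
    unfolding pA pB wd by (simp add: algebra_simps x_def)
  have id: "(x+y)*(z+w)*((x+z)*(y+w)) - (x*w - y*z)\<^sup>2 =
     x*w*(x*(y+z) + (y+z)*(w+y+z)) + y*z*x*(x+y+z) + y*z*w*(w+y+z) + 2*x*w*y*z"
    by (simp add: algebra_simps power2_eq_square)
  have "0 \<le> x*w*(x*(y+z) + (y+z)*(w+y+z)) + y*z*x*(x+y+z) + y*z*w*(w+y+z) + 2*x*w*y*z"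
    using x0 y0 z0 w0 by (intro add_nonneg_nonneg mult_nonneg_nonneg) auto
  then show ?thesis unfolding e1 e2 e3 using id by linarith
qed

end

lemma flip_exists:
  fixes a b c d :: real
  assumes "a < b" "c < d" "{a, b} \<noteq> {c, d}"
  shows "\<exists>p t. ((if b = p then t else b) - (if a = p then t else a)) *
                ((if d = p then t else d) - (if c = p then t else c)) < 0"
proof (cases "c \<in> {a, b}")
  case True
  then have "d \<notin> {a, b}" using assms by auto
  then show ?thesis using assms
    by (intro exI[of _ d] exI[of _ "c - 1"]) (auto simp: mult_pos_neg)
next
  case False
  then show ?thesis using assms
    by (intro exI[of _ c] exI[of _ "d + 1"]) (auto simp: mult_pos_neg)
qed

theorem proposition5:
  fixes M :: "'a measure" and X Y :: "'a \<Rightarrow> real"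
  assumes "prob_space M"
    and "X \<in> borel_measurable M" and "Y \<in> borel_measurable M"
    and "bi_atomic M X" and "bi_atomic M Y"
  shows "IC M X Y \<longleftrightarrow>
           (support M X = support M Y \<or> prob_space.indep_var M borel X borel Y)"
proof -
  interpret P: prob_space M by fact
  note X[measurable] = assms(2) and Y[measurable] = assms(3)
  obtain a b where ab: "a < b" "support M X = {a, b}" "AE w in M. X w = a \<or> X w = b"
    "0 < P.prob {w \<in> space M. X w = b}" "P.prob {w \<in> space M. X w = b} < 1"
    using P.bi_atomic_struct[OF X assms(4)] by blast
  obtain c d where cd: "c < d" "support M Y = {c, d}" "AE w in M. Y w = c \<or> Y w = d"
    "0 < P.prob {w \<in> space M. Y w = d}" "P.prob {w \<in> space M. Y w = d} < 1"
    using P.bi_atomic_struct[OF Y assms(5)] by blast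
  define A where "A = {w \<in> space M. X w = b}"
  define B where "B = {w \<in> space M. Y w = d}"
  have "A = X -` {b} \<inter> space M" "B = Y -` {d} \<inter> space M" by (auto simp: A_def B_def)
  then have evA: "A \<in> P.events" and evB: "B \<in> P.events"
    using measurable_sets[OF X borel_closed[OF closed_singleton]] measurable_sets[OF Y borel_closed[OF closed_singleton]]
    by simp_all
  have repX: "AE w in M. g (X w) = g a + (g b - g a) * indicator A w" for g :: "real \<Rightarrow> real"
    unfolding A_def using ab by (intro P.rep) auto
  have repY: "AE w in M. g (Y w) = g c + (g d - g c) * indicator B w" for g :: "real \<Rightarrow> real"
    unfolding B_def using cd by (intro P.rep) auto
  define vA where "vA = P.prob A - P.prob A * P.prob A"
  define vB where "vB = P.prob B - P.prob B * P.prob B"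
  define cc where "cc = P.prob (A \<inter> B) - P.prob A * P.prob B"
  define \<kappa> where "\<kappa> = cc / sqrt (vA * vB)"
  have vpos: "vA * vB > 0"
  proof -
    have "vA = P.prob A * (1 - P.prob A)" by (simp add: vA_def algebra_simps)
    moreover have "vB = P.prob B * (1 - P.prob B)" by (simp add: vB_def algebra_simps)
    ultimately show ?thesis using ab(4,5) cd(4,5) by (simp add: A_def B_def)
  qed
  have corr_g: "corr M (g \<circ> X) (g \<circ> Y) = sgn ((g b - g a) * (g d - g c)) * \<kappa>"
    if g: "g \<in> borel_measurable borel" and "g b \<noteq> g a" "g d \<noteq> g c" for g
  proof -
    have "corr M (\<lambda>w. g (X w)) (\<lambda>w. g (Y w)) = sgn ((g b - g a) * (g d - g c)) * \<kappa>"
      unfolding \<kappa>_def cc_def vA_def vB_def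
      by (rule P.corr_lin[OF evA evB _ _ repX repY]) (use that in \<open>auto intro: measurable_compose[OF _ g]\<close>)
    then show ?thesis by (simp add: comp_def)
  qed
  have corrXY: "corr M X Y = \<kappa>"
  proof -
    have "corr M X Y = sgn ((b - a) * (d - c)) * \<kappa>"
      unfolding \<kappa>_def cc_def vA_def vB_def
      by (rule P.corr_lin[OF evA evB X Y repX[of "\<lambda>x. x"] repY[of "\<lambda>x. x"]]) (use ab cd in auto)
    then show ?thesis using ab cd by simp
  qed
  have L2X: "in_L2 M (g \<circ> X) \<longleftrightarrow> g b \<noteq> g a" if g: "g \<in> borel_measurable borel" for g
  proof
    assume "in_L2 M (g \<circ> X)"
    then show "g b \<noteq> g a"
      using P.not_L2_const[of "g \<circ> X" "g a"] repX[of g] by (auto simp: comp_def elim: eventually_mono)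
  next
    assume "g b \<noteq> g a"
    then show "in_L2 M (g \<circ> X)"
      using P.in_L2_lin[OF evA _ repX[of g]] ab(4,5) g by (simp add: A_def comp_def measurable_compose[OF X g])
  qed
  have L2Y: "in_L2 M (g \<circ> Y) \<longleftrightarrow> g d \<noteq> g c" if g: "g \<in> borel_measurable borel" for g
  proof
    assume "in_L2 M (g \<circ> Y)"
    then show "g d \<noteq> g c"
      using P.not_L2_const[of "g \<circ> Y" "g c"] repY[of g] by (auto simp: comp_def elim: eventually_mono)
  next
    assume "g d \<noteq> g c"
    then show "in_L2 M (g \<circ> Y)"
      using P.in_L2_lin[OF evB _ repY[of g]] cd(4,5) g by (simp add: B_def comp_def measurable_compose[OF Y g])
  qed
  have idb: "(\<lambda>x::real. x) \<in> borel_measurable borel" by simp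
  have L2X0: "in_L2 M X" using L2X[OF idb] ab by (simp add: comp_def)
  have L2Y0: "in_L2 M Y" using L2Y[OF idb] cd by (simp add: comp_def)
  have ind: "P.indep_var borel X borel Y \<longleftrightarrow> cc = 0"
    unfolding cc_def A_def B_def using P.indep_iff[OF X Y ab(3) _ cd(3)] ab(1) cd(1) by simp
  have k0: "\<kappa> = 0 \<longleftrightarrow> cc = 0" proof -
    have "vA \<noteq> 0" "vB \<noteq> 0" using vpos by auto
    then show ?thesis unfolding \<kappa>_def by simp
  qed
  have kb: "\<bar>\<kappa>\<bar> \<le> 1"
  proof -
    have "cc\<^sup>2 \<le> vA * vB" unfolding cc_def vA_def vB_def by (rule P.cov_bound[OF evA evB])
    then have "sqrt (cc\<^sup>2) \<le> sqrt (vA * vB)" by (rule real_sqrt_le_mono)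
    then have "\<bar>cc\<bar> \<le> sqrt (vA * vB)" by simp
    then show ?thesis using vpos unfolding \<kappa>_def by (simp add: abs_div divide_le_eq_1)
  qed
  show ?thesis
  proof
    assume IC: "IC M X Y"
    show "support M X = support M Y \<or> P.indep_var borel X borel Y"
    proof (rule ccontr)
      assume H: "\<not> (support M X = support M Y \<or> P.indep_var borel X borel Y)"
      then have kn: "\<kappa> \<noteq> 0" using ind k0 by simp
      from IC obtain r where r: "IC_r M r X Y" unfolding IC_def by blast
      then have rk: "r = \<kappa>" using corrXY unfolding IC_r_def by simp
      have "{a, b} \<noteq> {c, d}" using H ab(2) cd(2) by auto
      then obtain p t where pt: "((if b = p then t else b) - (if a = p then t else a)) *
                ((if d = p then t else d) - (if c = p then t else c)) < 0"
        using flip_exists[OF ab(1) cd(1)] by blast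
      define g where "g = (\<lambda>x::real. if x = p then t else x)"
      have g: "g \<in> borel_measurable borel" unfolding g_def by measurable
      have neg: "(g b - g a) * (g d - g c) < 0" using pt by (simp add: g_def eq_commute)
      then have n1: "g b \<noteq> g a" "g d \<noteq> g c" by auto
      have "corr M (g \<circ> X) (g \<circ> Y) = r"
        using r g L2X[OF g] L2Y[OF g] n1 unfolding IC_r_def by blast
      moreover have "corr M (g \<circ> X) (g \<circ> Y) = - \<kappa>"
        using corr_g[OF g n1] neg by simp
      ultimately show False using rk kn by simp
    qed
  next
    assume H: "support M X = support M Y \<or> P.indep_var borel X borel Y"
    have "IC_r M \<kappa> X Y"
      unfolding IC_r_def
    proof (intro conjI allI impI L2X0 L2Y0 corrXY)
      fix g :: "real \<Rightarrow> real"
      assume G: "g \<in> borel_measurable borel \<and> in_L2 M (g \<circ> X) \<and> in_L2 M (g \<circ> Y)"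
      then have g: "g \<in> borel_measurable borel" and n1: "g b \<noteq> g a" "g d \<noteq> g c"
        using L2X L2Y by auto
      show "corr M (g \<circ> X) (g \<circ> Y) = \<kappa>"
      proof (cases "support M X = support M Y")
        case True
        then have "{a, b} = {c, d}" using ab(2) cd(2) by simp
        then have "a = c \<and> b = d" using ab(1) cd(1)
          by (metis doubleton_eq_iff less_asym)
        then show ?thesis using corr_g[OF g n1] n1
          by (simp add: sgn_mult)
      next
        case False
        then have "\<kappa> = 0" using H ind k0 by simp
        then show ?thesis using corr_g[OF g n1] by simp
      qed
    qed
    moreover have "\<kappa> \<in> {-1..1}" using kb by (simp add: abs_le_iff)
    ultimately show "IC M X Y" unfolding IC_def by blast
  qed
qed

end
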